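(* Let $d\ge3$ be odd and $n>2$. Then the following statement is false: "for every $A\in\mathrm{Hull}(\Lambda_{d-1}(d,n))$ we have $\operatorname{Per}(A)\ge(n!/n^n)^{d-1}$, with equality if and only if $A=n^{1-d}J_n^d$." That is, there exists $A\in\mathrm{Hull}(\Lambda_{d-1}(d,n))$ such that either $\operatorname{Per}(A)<(n!/n^n)^{d-1}$, or $\operatorname{Per}(A)=(n!/n^n)^{d-1}$ and $A\ne n^{1-d}J_n^d$.
   Context: Let $I_n=\{1,\dots,n\}$. A $d$-dimensional matrix of order $n$ is a function $I_n^d\to\mathbb R$. A $(d-1)$-plane (hyperplane) is the set of positions with one coordinate fixed. $\Lambda_{d-1}(d,n)$ is the set of $(0,1)$-valued $d$-dimensional matrices of order $n$ with exactly one $1$ in each hyperplane. $\mathrm{Hull}(X)$ denotes the convex hull of $X$. A diagonal is a selection of $n$ positions any two of which differ in every coordinate; $\operatorname{Per}(A)$ is the sum over diagonals of the product of the entries on the diagonal. $J_n^d$ is the $d$-dimensional matrix of order $n$ with all entries $1$. *)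

theory Defs
  imports Complex_Main
begin

text \<open>Positions of a d-dimensional matrix of order n: index tuples (i_1,...,i_d) with
  1 \<le> i_k \<le> n, represented as lists of length d (coordinate k is xs ! k, k < d).
  A d-dimensional matrix of order n is a function on these positions; we represent it as
  a function nat list \<Rightarrow> real, only its values on positions being relevant.\<close>

definition positions :: "nat \<Rightarrow> nat \<Rightarrow> nat list set" where
  "positions d n = {xs. length xs = d \<and> set xs \<subseteq> {1..n}}"

definition is_matrix :: "nat \<Rightarrow> nat \<Rightarrow> (nat list \<Rightarrow> real) \<Rightarrow> bool" where
  "is_matrix d n A \<longleftrightarrow> (\<forall>xs. xs \<notin> positions d n \<longrightarrow> A xs = 0)"

definition hyperplane :: "nat \<Rightarrow> nat \<Rightarrow> nat \<Rightarrow> nat \<Rightarrow> nat list set" where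
  "hyperplane d n k j = {xs \<in> positions d n. xs ! k = j}"

definition Lambda :: "nat \<Rightarrow> nat \<Rightarrow> (nat list \<Rightarrow> real) set" where
  "Lambda d n = {A. is_matrix d n A \<and> (\<forall>xs. A xs \<in> {0, 1}) \<and>
      (\<forall>k<d. \<forall>j\<in>{1..n}. card {xs \<in> hyperplane d n k j. A xs = 1} = 1)}"

text \<open>Convex hull, as the set of finite convex combinations (Lambda d n is finite).\<close>
definition Hull :: "(nat list \<Rightarrow> real) set \<Rightarrow> (nat list \<Rightarrow> real) set" where
  "Hull X = {A. \<exists>S w. finite S \<and> S \<subseteq> X \<and> (\<forall>L\<in>S. w L \<ge> 0) \<and> (\<Sum>L\<in>S. w L) = 1 \<and>
                  A = (\<lambda>xs. \<Sum>L\<in>S. w L * L xs)}"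

definition diagonals :: "nat \<Rightarrow> nat \<Rightarrow> nat list set set" where
  "diagonals d n = {D. D \<subseteq> positions d n \<and> card D = n \<and>
      (\<forall>x\<in>D. \<forall>y\<in>D. x \<noteq> y \<longrightarrow> (\<forall>k<d. x ! k \<noteq> y ! k))}"

definition Per :: "nat \<Rightarrow> nat \<Rightarrow> (nat list \<Rightarrow> real) \<Rightarrow> real" where
  "Per d n A = (\<Sum>D\<in>diagonals d n. \<Prod>x\<in>D. A x)"

definition J :: "nat \<Rightarrow> nat \<Rightarrow> nat list \<Rightarrow> real" where
  "J d n = (\<lambda>xs. if xs \<in> positions d n then 1 else 0)"

end

theory Submission
  imports Defs "HOL-Combinatorics.Permutations" "HOL-Library.FuncSet"
begin


lemma hull_sum:
  fixes c :: "'i \<Rightarrow> real" and L :: "'i \<Rightarrow> nat list \<Rightarrow> real"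
  assumes "finite I" "\<And>i. i \<in> I \<Longrightarrow> c i \<ge> 0" "(\<Sum>i\<in>I. c i) = 1" "\<And>i. i \<in> I \<Longrightarrow> L i \<in> X"
  shows "(\<lambda>xs. \<Sum>i\<in>I. c i * L i xs) \<in> Hull X"
proof -
  define w where "w M = (\<Sum>i\<in>{i\<in>I. L i = M}. c i)" for M
  have fin: "finite (L ` I)" using assms(1) by simp
  have sub: "L ` I \<subseteq> X" using assms(4) by auto
  have wn: "\<forall>M\<in>L ` I. w M \<ge> 0" unfolding w_def by (auto intro!: sum_nonneg assms(2))
  have ws: "(\<Sum>M\<in>L ` I. w M) = 1"
    unfolding w_def using sum.image_gen[OF assms(1), of c L] assms(3) by simp
  have eq: "(\<lambda>xs. \<Sum>i\<in>I. c i * L i xs) = (\<lambda>xs. \<Sum>M\<in>L ` I. w M * M xs)"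
  proof
    fix xs
    have "(\<Sum>i\<in>I. c i * L i xs) = (\<Sum>M\<in>L ` I. \<Sum>i\<in>{i\<in>I. L i = M}. c i * L i xs)"
      using sum.image_gen[OF assms(1), of "\<lambda>i. c i * L i xs" L] by simp
    also have "\<dots> = (\<Sum>M\<in>L ` I. w M * M xs)"
      unfolding w_def sum_distrib_right
      by (rule sum.cong) (auto intro!: sum.cong)
    finally show "(\<Sum>i\<in>I. c i * L i xs) = (\<Sum>M\<in>L ` I. w M * M xs)" .
  qed
  show ?thesis unfolding Hull_def eq using fin sub wn ws by blast
qed

definition Mat :: "nat \<Rightarrow> nat \<Rightarrow> (nat \<Rightarrow> nat \<Rightarrow> nat) \<Rightarrow> nat list \<Rightarrow> real" where
  "Mat d n f xs = (if xs \<in> positions d n \<and> (\<forall>k\<in>{1..<d}. xs ! k = f k (xs ! 0)) then 1 else 0)"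

lemma pos_nth: "xs \<in> positions d n \<Longrightarrow> k < d \<Longrightarrow> xs ! k \<in> {1..n}"
  unfolding positions_def using nth_mem by blast

lemma ind_prod:
  assumes "finite K"
  shows "(if \<forall>k\<in>K. P k then 1 else 0) = (\<Prod>k\<in>K. (if P k then 1 else 0) :: real)"
  using assms by (induction K rule: finite_induct) auto

lemma Mat_Lambda:
  assumes d: "d \<ge> 1" and bij: "\<And>k. k \<in> {1..<d} \<Longrightarrow> bij_betw (f k) {1..n} {1..n}"
  shows "Mat d n f \<in> Lambda d n"
proof -
  have "card {xs \<in> hyperplane d n k j. Mat d n f xs = 1} = 1" if k: "k < d" and j: "j \<in> {1..n}" for k j
  proof -
    define i where "i = (if k = 0 then j else inv_into {1..n} (f k) j)"
    have i: "i \<in> {1..n}"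
    proof (cases "k = 0")
      case False
      then have "bij_betw (f k) {1..n} {1..n}" using bij k by auto
      then have "j \<in> f k ` {1..n}" using j by (simp add: bij_betw_def)
      from inv_into_into[OF this] show ?thesis using False unfolding i_def by simp
    qed (use j i_def in auto)
    have fk: "k \<noteq> 0 \<Longrightarrow> f k i = j" using j bij[of k] k unfolding i_def
      by (auto simp: bij_betw_def f_inv_into_f)
    define pt where "pt = map (\<lambda>l. if l = 0 then i else f l i) [0..<d]"
    have fi: "f l i \<in> {1..n}" if "l \<in> {1..<d}" for l
      using bij_betwE[OF bij[OF that]] i by blast
    have ptpos: "pt \<in> positions d n"
      unfolding positions_def pt_def using i fi by (auto simp del: atLeastAtMost_iff)
    have "{xs \<in> hyperplane d n k j. Mat d n f xs = 1} = {pt}"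
    proof (intro equalityI subsetI)
      fix xs assume "xs \<in> {xs \<in> hyperplane d n k j. Mat d n f xs = 1}"
      then have xs: "xs \<in> positions d n" "xs ! k = j" "\<forall>l\<in>{1..<d}. xs ! l = f l (xs ! 0)"
        unfolding hyperplane_def Mat_def by (auto split: if_splits)
      have x0: "xs ! 0 \<in> {1..n}" using pos_nth[OF xs(1)] d by simp
      have "xs ! 0 = i"
      proof (cases "k = 0")
        case True then show ?thesis using xs unfolding i_def by simp
      next
        case False
        then have "f k (xs ! 0) = j" using xs k by auto
        then show ?thesis unfolding i_def using False x0 bij[of k] k
          by (auto simp: bij_betw_def inv_into_f_f)
      qed
      then have "xs = pt" using xs unfolding pt_def positions_def
        by (intro nth_equalityI) auto
      then show "xs \<in> {pt}" by simp
    next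
      fix xs assume "xs \<in> {pt}"
      then have "xs = pt" by simp
      moreover have "pt ! k = j" unfolding pt_def using k fk i_def by auto
      moreover have "Mat d n f pt = 1" unfolding Mat_def using ptpos d
        by (auto simp: pt_def)
      ultimately show "xs \<in> {xs \<in> hyperplane d n k j. Mat d n f xs = 1}"
        using ptpos unfolding hyperplane_def by auto
    qed
    then show ?thesis by simp
  qed
  then show ?thesis unfolding Lambda_def is_matrix_def Mat_def by auto
qed



lemma modinv: "t < (n::nat) \<Longrightarrow> a < n \<Longrightarrow> ((a + t) mod n + (n - t)) mod n = a"
proof -
  assume a: "t < n" "a < n"
  have "((a + t) mod n + (n - t)) mod n = (a + t + (n - t)) mod n" by (simp add: mod_add_left_eq)
  also have "a + t + (n - t) = a + n" using a by simp
  finally show ?thesis using a by simp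
qed

lemma modinv2: "t < (n::nat) \<Longrightarrow> a < n \<Longrightarrow> ((a + t) mod n + n - a) mod n = t"
  using less_imp_diff_less mod_if not_add_less2 by auto

definition sh :: "nat \<Rightarrow> nat \<Rightarrow> nat \<Rightarrow> nat" where
  "sh n t i = (i - 1 + t) mod n + 1"

lemma sh_bij: "t < n \<Longrightarrow> bij_betw (sh n t) {1..n} {1..n}"
proof -
  assume t: "t < n"
  then have n: "n > 0" by simp
  have mm: "v mod n + 1 \<le> n" for v using n by (metis Suc_eq_plus1 Suc_leI mod_less_divisor)
  have into: "sh n t ` {1..n} \<subseteq> {1..n}" using mm unfolding sh_def by auto
  have inj: "inj_on (sh n t) {1..n}"
  proof (rule inj_onI)
    fix x y assume x: "x \<in> {1..n}" and y: "y \<in> {1..n}" and e: "sh n t x = sh n t y"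
    then have "(x - 1 + t) mod n = (y - 1 + t) mod n" unfolding sh_def by simp
    then have "((x - 1 + t) mod n + (n - t)) mod n = ((y - 1 + t) mod n + (n - t)) mod n" by simp
    then have "x - 1 = y - 1" using modinv[OF t, of "x - 1"] modinv[OF t, of "y - 1"] x y by auto
    then show "x = y" using x y by auto
  qed
  show ?thesis using endo_inj_surj[OF finite_atLeastAtMost into inj] inj
    by (simp add: bij_betw_def)
qed

lemma sh0: "i \<in> {1..n} \<Longrightarrow> sh n 0 i = i"
  unfolding sh_def by auto

lemma sh_eq_iff:
  assumes "t < n" "i \<in> {1..n}" "g \<in> {1..n}"
  shows "sh n t i = g \<longleftrightarrow> t = (g + n - i) mod n"
proof -
  have "sh n t i = g \<longleftrightarrow> (i - 1 + t) mod n = g - 1" using assms unfolding sh_def by auto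
  also have "\<dots> \<longleftrightarrow> t = (g + n - i) mod n"
  proof
    assume h: "(i - 1 + t) mod n = g - 1"
    have "(g + n - i) mod n = ((i - 1 + t) mod n + n - (i - 1)) mod n" using h assms by auto
    also have "\<dots> = t" using assms modinv2[of t n "i - 1"] by auto
    finally show "t = (g + n - i) mod n" by simp
  next
    assume h: "t = (g + n - i) mod n"
    have "(i - 1 + t) mod n = (i - 1 + (g + n - i)) mod n" unfolding h by (simp add: mod_add_right_eq)
    also have "i - 1 + (g + n - i) = (g - 1) + n" using assms by auto
    moreover have "g - 1 < n" using assms by auto
    ultimately show "(i - 1 + t) mod n = g - 1" by simp
  qed
  finally show ?thesis .
qed

lemma bij_eq_inv:
  assumes "bij_betw f A A" "y \<in> A" "z \<in> A"
  shows "z = f y \<longleftrightarrow> y = inv_into A f z"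
  using assms by (metis bij_betw_def bij_betw_inv_into_left f_inv_into_f)

lemma partition:
  assumes x: "xs \<in> positions d n" and d: "d \<ge> 1"
    and bij: "\<And>k. k \<in> {1..<d} \<Longrightarrow> bij_betw (f k) {1..n} {1..n}"
  shows "(\<Sum>a\<in>PiE {1..<d} (\<lambda>_. {0..<n}). Mat d n (\<lambda>k. f k \<circ> sh n (a k)) xs) = 1"
proof -
  define P where "P = PiE {1..<d} (\<lambda>_. {0..<n::nat})"
  define g where "g k = inv_into {1..n} (f k) (xs ! k)" for k
  define a0 where "a0 = restrict (\<lambda>k. (g k + n - xs ! 0) mod n) {1..<d}"
  have x0: "xs ! 0 \<in> {1..n}" using pos_nth[OF x] d by simp
  then have n: "n > 0" by auto
  have gk: "g k \<in> {1..n}" if "k \<in> {1..<d}" for k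
  proof -
    have "xs ! k \<in> f k ` {1..n}" using pos_nth[OF x] that bij[OF that] by (auto simp: bij_betw_def)
    then show ?thesis unfolding g_def by (rule inv_into_into)
  qed
  have a0P: "a0 \<in> P" unfolding a0_def P_def using n by auto
  have key: "Mat d n (\<lambda>k. f k \<circ> sh n (a k)) xs = (if a = a0 then 1 else 0)" if a: "a \<in> P" for a
  proof -
    have "(\<forall>k\<in>{1..<d}. xs ! k = (f k \<circ> sh n (a k)) (xs ! 0)) \<longleftrightarrow>
          (\<forall>k\<in>{1..<d}. a k = (g k + n - xs ! 0) mod n)"
    proof (intro ball_cong refl)
      fix k assume k: "k \<in> {1..<d}"
      have ak: "a k < n" using a k unfolding P_def by auto
      have shin: "sh n (a k) (xs ! 0) \<in> {1..n}" using sh_bij[OF ak] x0 by (auto dest: bij_betwE)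
      have "xs ! k = (f k \<circ> sh n (a k)) (xs ! 0) \<longleftrightarrow> sh n (a k) (xs ! 0) = g k"
        unfolding g_def comp_def using bij_eq_inv[OF bij[OF k] shin, of "xs ! k"] pos_nth[OF x, of k] k by auto
      also have "\<dots> \<longleftrightarrow> a k = (g k + n - xs ! 0) mod n" using sh_eq_iff[OF ak x0 gk[OF k]] .
      finally show "xs ! k = (f k \<circ> sh n (a k)) (xs ! 0) \<longleftrightarrow> a k = (g k + n - xs ! 0) mod n" .
    qed
    also have "\<dots> \<longleftrightarrow> a = a0"
    proof
      assume h: "\<forall>k\<in>{1..<d}. a k = (g k + n - xs ! 0) mod n"
      show "a = a0"
      proof
        fix k show "a k = a0 k"
          using h a unfolding a0_def P_def by (cases "k \<in> {1..<d}") (auto simp: PiE_def extensional_def)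
      qed
    qed (auto simp: a0_def)
    finally show ?thesis unfolding Mat_def using x by auto
  qed
  have "(\<Sum>a\<in>P. Mat d n (\<lambda>k. f k \<circ> sh n (a k)) xs) = (\<Sum>a\<in>P. if a = a0 then 1 else 0)"
    using key by (intro sum.cong) auto
  also have "\<dots> = 1" using a0P unfolding P_def by (simp add: finite_PiE)
  finally show ?thesis unfolding P_def .
qed



definition bb :: "nat \<Rightarrow> real" where
  "bb i = (if i = 1 then 1 else if i = 2 then -1 else 0)"
definition gg :: "nat \<Rightarrow> real" where
  "gg i = (if i = 1 \<or> i = 2 then 1 else if i = 3 then -2 else 0)"
definition pp :: "nat \<Rightarrow> nat \<Rightarrow> nat" where
  "pp r i = (if r = 1 then (if i = 1 then 2 else if i = 2 then 1 else i)
    else if r = 2 then (if i = 2 then 3 else if i = 3 then 2 else i)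
    else if r = 3 then (if i = 1 then 2 else if i = 2 then 3 else if i = 3 then 1 else i)
    else i)"
definition bet :: "nat \<Rightarrow> nat \<Rightarrow> real" where
  "bet k r = (if k = 1 then (if r = 0 then 1 else if r = 1 then -1 else 0)
    else (if r = 0 then -1 else if r = 1 then 1 else if r = 2 then 2 else -2))"
definition EE :: "nat \<Rightarrow> nat list \<Rightarrow> real" where
  "EE d xs = (\<Prod>k<d. bb (xs ! k))"

lemma sum4: "(\<Sum>r<(4::nat). h r) = h 0 + h 1 + h 2 + (h 3 :: real)"
  by (simp add: numeral_eq_Suc)
lemma pp0: "pp 0 i = i" by (simp add: pp_def)
lemma pp1: "pp 1 i = (if i = 1 then 2 else if i = 2 then 1 else i)" by (simp add: pp_def)
lemma pp2: "pp 2 i = (if i = 2 then 3 else if i = 3 then 2 else i)" by (simp add: pp_def)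
lemma pp3: "pp 3 i = (if i = 1 then 2 else if i = 2 then 3 else if i = 3 then 1 else i)" by (simp add: pp_def)

lemma pp_bij:
  assumes "n \<ge> 3" "r < 4"
  shows "bij_betw (pp r) {1..n} {1..n}"
proof -
  have into: "pp r ` {1..n} \<subseteq> {1..n}" using assms unfolding pp_def by auto
  have "r = 0 \<or> r = 1 \<or> r = 2 \<or> r = 3" using assms by auto
  then have inj: "inj_on (pp r) {1..n}"
    by (elim disjE; auto simp: inj_on_def pp_def split: if_splits)
  show ?thesis using endo_inj_surj[OF finite_atLeastAtMost into inj] inj
    by (simp add: bij_betw_def)
qed

lemma Vid: "(\<Sum>r<4. bet k r * (if j = pp r i then 1 else 0)) = (if k = 1 then bb i else gg i) * bb j"
proof -
  have "i = 1 \<or> i = 2 \<or> i = 3 \<or> i \<notin> {1,2,3}" by auto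
  moreover have "j = 1 \<or> j = 2 \<or> j = 3 \<or> j \<notin> {1,2,3}" by auto
  ultimately show ?thesis unfolding sum4 pp0 pp1 pp2 pp3
    by (cases "k = 1") (elim disjE; simp add: bet_def bb_def gg_def)+
qed

lemma bet_abs: "r < 4 \<Longrightarrow> \<bar>bet k r\<bar> \<le> 2"
  unfolding bet_def by auto

lemma bet_sum1: "(\<Sum>r<4. bet 1 r) = 0"
  unfolding sum4 bet_def by simp

definition coef :: "nat \<Rightarrow> (nat \<Rightarrow> nat) \<Rightarrow> real" where
  "coef d q = (\<Prod>k\<in>{1..<d}. bet k (q k))"

lemma pert:
  assumes x: "xs \<in> positions d n" and d: "d \<ge> 2"
  shows "(\<Sum>q\<in>PiE {1..<d} (\<lambda>_. {..<4}). coef d q * Mat d n (\<lambda>k. pp (q k)) xs) = EE d xs"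
proof -
  have "(\<Sum>q\<in>PiE {1..<d} (\<lambda>_. {..<4}). coef d q * Mat d n (\<lambda>k. pp (q k)) xs)
      = (\<Sum>q\<in>PiE {1..<d} (\<lambda>_. {..<4}). \<Prod>k\<in>{1..<d}. bet k (q k) * (if xs ! k = pp (q k) (xs ! 0) then 1 else 0))"
    unfolding coef_def Mat_def using x by (simp add: ind_prod prod.distrib)
  also have "\<dots> = (\<Prod>k\<in>{1..<d}. \<Sum>r<4. bet k r * (if xs ! k = pp r (xs ! 0) then 1 else 0))"
    by (rule prod_sum_PiE[symmetric]) auto
  also have "\<dots> = (\<Prod>k\<in>{1..<d}. (if k = 1 then bb (xs ! 0) else gg (xs ! 0)) * bb (xs ! k))"
    by (simp add: Vid)
  also have "\<dots> = (\<Prod>k\<in>{1..<d}. (if k = 1 then bb (xs ! 0) else gg (xs ! 0))) * (\<Prod>k\<in>{1..<d}. bb (xs ! k))"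
    by (rule prod.distrib)
  also have "(\<Prod>k\<in>{1..<d}. (if k = 1 then bb (xs ! 0) else gg (xs ! 0))) = bb (xs ! 0)"
  proof (cases "xs ! 0 = 1 \<or> xs ! 0 = 2")
    case True
    then have "(\<Prod>k\<in>{1..<d}. (if k = 1 then bb (xs ! 0) else gg (xs ! 0))) = (\<Prod>k\<in>{1..<d}. (if k = 1 then bb (xs ! 0) else 1))"
      by (intro prod.cong) (auto simp: gg_def)
    also have "\<dots> = bb (xs ! 0)" using d by (simp add: prod.delta)
    finally show ?thesis .
  next
    case False
    then have "bb (xs ! 0) = 0" by (simp add: bb_def)
    moreover have "1 \<in> {1..<d}" using d by simp
    ultimately show ?thesis using prod.remove[of "{1..<d}" 1 "\<lambda>k. if k = 1 then bb (xs ! 0) else gg (xs ! 0)"]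
      by simp
  qed
  also have "bb (xs ! 0) * (\<Prod>k\<in>{1..<d}. bb (xs ! k)) = EE d xs"
  proof -
    have "{..<d} = insert 0 {1..<d}" using d by auto
    then show ?thesis unfolding EE_def by simp
  qed
  finally show ?thesis .
qed

lemma sum_coef: "d \<ge> 2 \<Longrightarrow> (\<Sum>q\<in>PiE {1..<d} (\<lambda>_. {..<4}). coef d q) = 0"
proof -
  assume d: "d \<ge> 2"
  have "(\<Sum>q\<in>PiE {1..<d} (\<lambda>_. {..<4}). coef d q) = (\<Prod>k\<in>{1..<d}. \<Sum>r<4. bet k r)"
    unfolding coef_def by (rule prod_sum_PiE[symmetric]) auto
  also have "\<dots> = 0" using d bet_sum1 by (intro prod_zero) auto
  finally show ?thesis .
qed

lemma coef_abs: "q \<in> PiE {1..<d} (\<lambda>_. {..<4}) \<Longrightarrow> \<bar>coef d q\<bar> \<le> 2 ^ (d - 1)"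
proof -
  assume q: "q \<in> PiE {1..<d} (\<lambda>_. {..<4})"
  have "\<bar>coef d q\<bar> = (\<Prod>k\<in>{1..<d}. \<bar>bet k (q k)\<bar>)" unfolding coef_def by (simp add: abs_prod)
  also have "\<dots> \<le> (\<Prod>k\<in>{1..<d}. 2)" using q by (intro prod_mono) (auto intro: bet_abs)
  finally show ?thesis by simp
qed



lemma Mat_z:
  assumes "\<And>k. k \<in> {1..<d} \<Longrightarrow> z k = 0"
  shows "Mat d n (\<lambda>k. f k \<circ> sh n (z k)) xs = Mat d n f xs"
proof (cases "xs \<in> positions d n \<and> d \<ge> 1")
  case True
  then have "xs ! 0 \<in> {1..n}" using pos_nth by auto
  then show ?thesis unfolding Mat_def using assms sh0 by auto
next
  case False
  then show ?thesis unfolding Mat_def by auto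
qed

lemma ifz: "(if P then a else 0) * (b::real) = (if P then a * b else 0)" by simp

lemma A_hull:
  assumes d: "d \<ge> 2" and n: "n \<ge> 3" and u: "u = 1 / real n ^ (d - 1)"
    and eps: "\<bar>\<epsilon>\<bar> \<le> u / 8 ^ (d - 1)"
  shows "(\<lambda>xs. if xs \<in> positions d n then u + \<epsilon> * EE d xs else 0) \<in> Hull (Lambda d n)"
proof -
  define T where "T = PiE {1..<d} (\<lambda>_. {..<4::nat})"
  define Sh where "Sh = PiE {1..<d} (\<lambda>_. {0..<n})"
  define z where "z = restrict (\<lambda>_. 0::nat) {1..<d}"
  define m where "m = (4::real) ^ (d - 1)"
  define c where "c p = (u + (if snd p = z then \<epsilon> * m * coef d (fst p) else 0)) / m" for p
  define L where "L p = Mat d n (\<lambda>k. pp (fst p k) \<circ> sh n (snd p k))" for p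
  have finT: "finite T" unfolding T_def by (simp add: finite_PiE)
  have finSh: "finite Sh" unfolding Sh_def by (simp add: finite_PiE)
  have cardT: "card T = 4 ^ (d - 1)" unfolding T_def by (simp add: card_PiE)
  have cardSh: "card Sh = n ^ (d - 1)" unfolding Sh_def by (simp add: card_PiE)
  have zSh: "z \<in> Sh" unfolding z_def Sh_def using n by auto
  have mpos: "m > 0" unfolding m_def by simp
  have upos: "u > 0" unfolding u using n by simp
  have un: "u * real n ^ (d - 1) = 1" unfolding u using n by simp
  have qT: "q k < 4" if "q \<in> T" "k \<in> {1..<d}" for q k using that unfolding T_def by auto
  have aSh: "a k < n" if "a \<in> Sh" "k \<in> {1..<d}" for a k using that unfolding Sh_def by auto
  have cnn: "c p \<ge> 0" if "p \<in> T \<times> Sh" for p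
  proof -
    have "\<bar>\<epsilon> * m * coef d (fst p)\<bar> = \<bar>\<epsilon>\<bar> * m * \<bar>coef d (fst p)\<bar>" using mpos by (simp add: abs_mult)
    also have "\<dots> \<le> (u / 8 ^ (d - 1)) * m * 2 ^ (d - 1)"
      using that coef_abs[of "fst p" d] eps mpos upos unfolding T_def
      by (intro mult_mono) auto
    also have "\<dots> = u"
    proof -
      have "(8::real) ^ (d - 1) = 4 ^ (d - 1) * 2 ^ (d - 1)" by (simp add: power_mult_distrib[symmetric])
      then show ?thesis unfolding m_def by simp
    qed
    finally have "\<bar>\<epsilon> * m * coef d (fst p)\<bar> \<le> u" .
    then show ?thesis unfolding c_def using mpos by (auto intro!: divide_nonneg_pos)
  qed
  have csplit: "c (q, a) = u / m + (if a = z then \<epsilon> * coef d q else 0)" for q a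
    unfolding c_def using mpos by (auto simp: add_divide_distrib)
  have csum: "(\<Sum>p\<in>T \<times> Sh. c p) = 1"
  proof -
    have "(\<Sum>p\<in>T \<times> Sh. c p) = (\<Sum>q\<in>T. \<Sum>a\<in>Sh. c (q, a))"
      by (simp add: sum.cartesian_product)
    also have "\<dots> = (\<Sum>q\<in>T. card Sh * (u / m) + \<epsilon> * coef d q)"
      unfolding csplit sum.distrib using finSh zSh by (simp add: sum.delta)
    also have "\<dots> = card T * (card Sh * (u / m)) + \<epsilon> * (\<Sum>q\<in>T. coef d q)"
      by (simp add: sum.distrib sum_distrib_left)
    also have "(\<Sum>q\<in>T. coef d q) = 0" unfolding T_def using sum_coef[OF d] .
    also have "card T * (card Sh * (u / m)) = 1"
      unfolding cardT cardSh m_def using un by (simp add: mult.commute)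
    finally show ?thesis by simp
  qed
  have Lin: "L p \<in> Lambda d n" if "p \<in> T \<times> Sh" for p
    unfolding L_def
  proof (rule Mat_Lambda)
    show "1 \<le> d" using d by simp
    fix k assume k: "k \<in> {1..<d}"
    show "bij_betw (pp (fst p k) \<circ> sh n (snd p k)) {1..n} {1..n}"
      using that k qT aSh n by (intro bij_betw_trans[OF sh_bij pp_bij]) auto
  qed
  have Aeq: "(\<lambda>xs. if xs \<in> positions d n then u + \<epsilon> * EE d xs else 0) = (\<lambda>xs. \<Sum>p\<in>T \<times> Sh. c p * L p xs)"
  proof
    fix xs
    show "(if xs \<in> positions d n then u + \<epsilon> * EE d xs else 0) = (\<Sum>p\<in>T \<times> Sh. c p * L p xs)"
    proof (cases "xs \<in> positions d n")
      case False
      then have "L p xs = 0" for p unfolding L_def Mat_def by simp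
      then show ?thesis using False by simp
    next
      case True
      have "(\<Sum>p\<in>T \<times> Sh. c p * L p xs) = (\<Sum>q\<in>T. \<Sum>a\<in>Sh. c (q, a) * L (q, a) xs)"
        by (simp add: sum.cartesian_product)
      also have "\<dots> = (\<Sum>q\<in>T. (u / m) * (\<Sum>a\<in>Sh. L (q, a) xs) + \<epsilon> * coef d q * L (q, z) xs)"
        unfolding csplit distrib_right sum.distrib using finSh zSh
        by (simp add: sum_distrib_left sum.delta ifz)
      also have "\<dots> = (\<Sum>q\<in>T. (u / m) + \<epsilon> * (coef d q * Mat d n (\<lambda>k. pp (q k)) xs))"
      proof (rule sum.cong[OF refl])
        fix q assume q: "q \<in> T"
        have "(\<Sum>a\<in>Sh. L (q, a) xs) = 1"
          unfolding L_def Sh_def fst_conv snd_conv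
          using partition[OF True, of "\<lambda>k. pp (q k)"] d qT[OF q] pp_bij n by auto
        moreover have "L (q, z) xs = Mat d n (\<lambda>k. pp (q k)) xs"
          unfolding L_def fst_conv snd_conv by (rule Mat_z) (simp add: z_def)
        ultimately show "(u / m) * (\<Sum>a\<in>Sh. L (q, a) xs) + \<epsilon> * coef d q * L (q, z) xs
            = (u / m) + \<epsilon> * (coef d q * Mat d n (\<lambda>k. pp (q k)) xs)" by simp
      qed
      also have "\<dots> = card T * (u / m) + \<epsilon> * EE d xs"
        unfolding sum.distrib sum_distrib_left[symmetric] T_def using pert[OF True d]
        by (simp add: card_PiE)
      also have "card T * (u / m) = u" unfolding cardT m_def by simp
      finally show ?thesis using True by simp
    qed
  qed
  show ?thesis unfolding Aeq
    by (rule hull_sum) (use finT finSh cnn csum Lin in auto)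
qed



lemma finite_positions: "finite (positions d n)"
proof -
  have "positions d n = {xs. set xs \<subseteq> {1..n} \<and> length xs = d}" unfolding positions_def by auto
  then show ?thesis using finite_lists_length_eq[of "{1..n}" d] by simp
qed

lemma finite_diagonals: "finite (diagonals d n)"
proof -
  have "diagonals d n \<subseteq> Pow (positions d n)" unfolding diagonals_def by auto
  then show ?thesis using finite_positions by (meson finite_Pow_iff finite_subset)
qed

lemma diag_bij:
  assumes D: "D \<in> diagonals d n" and d: "d \<ge> 1"
  shows "bij_betw (\<lambda>x. x ! 0) D {1..n}"
proof -
  have sub: "D \<subseteq> positions d n" and cD: "card D = n"
    and dif: "\<And>x y k. x \<in> D \<Longrightarrow> y \<in> D \<Longrightarrow> x \<noteq> y \<Longrightarrow> k < d \<Longrightarrow> x ! k \<noteq> y ! k"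
    using D unfolding diagonals_def by auto
  have inj: "inj_on (\<lambda>x. x ! 0) D" using dif d by (meson inj_onI less_le_trans zero_less_one)
  have im: "(\<lambda>x. x ! 0) ` D \<subseteq> {1..n}" using sub pos_nth d by fastforce
  have fin: "finite D" using sub finite_positions finite_subset by blast
  have "card ((\<lambda>x. x ! 0) ` D) = card {1..n}" using card_image[OF inj] cD by simp
  then have "(\<lambda>x. x ! 0) ` D = {1..n}" using card_subset_eq[OF _ im] by simp
  then show ?thesis using inj by (simp add: bij_betw_def)
qed

definition enc :: "nat \<Rightarrow> nat \<Rightarrow> nat list set \<Rightarrow> nat \<Rightarrow> nat \<Rightarrow> nat" where
  "enc d n D = restrict (\<lambda>k i. if i \<in> {1..n} then (the_inv_into D (\<lambda>x. x ! 0) i) ! k else i) {1..<d}"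

lemma card_diagonals:
  assumes d: "d \<ge> 1"
  shows "card (diagonals d n) \<le> fact n ^ (d - 1)"
proof -
  define P where "P = PiE {1..<d} (\<lambda>_. {p. p permutes {1..n}})"
  have cardP: "card P = fact n ^ (d - 1)" unfolding P_def
    by (simp add: card_PiE card_permutations)
  have finP: "finite P" unfolding P_def by (simp add: finite_PiE finite_permutations)
  note facts = diag_bij[OF _ d]
  have pt: "the_inv_into D (\<lambda>x. x ! 0) i \<in> D \<and> (the_inv_into D (\<lambda>x. x ! 0) i) ! 0 = i"
    if "D \<in> diagonals d n" "i \<in> {1..n}" for D i
    using facts[OF that(1)] that(2)
    by (metis bij_betw_def f_the_inv_into_f_bij_betw order_refl the_inv_into_into)
  have ptx: "the_inv_into D (\<lambda>x. x ! 0) (x ! 0) = x" if "D \<in> diagonals d n" "x \<in> D" for D x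
    using facts[OF that(1)] that(2) the_inv_into_f_f[of "\<lambda>x. x ! 0" D x] by (simp add: bij_betw_def)
  have encP: "enc d n D \<in> P" if D: "D \<in> diagonals d n" for D
  proof -
    have sub: "D \<subseteq> positions d n"
      and dif: "\<And>x y k. x \<in> D \<Longrightarrow> y \<in> D \<Longrightarrow> x \<noteq> y \<Longrightarrow> k < d \<Longrightarrow> x ! k \<noteq> y ! k"
      using D unfolding diagonals_def by auto
    have "(\<lambda>i. if i \<in> {1..n} then (the_inv_into D (\<lambda>x. x ! 0) i) ! k else i) permutes {1..n}"
      if k: "k \<in> {1..<d}" for k
    proof (rule bij_imp_permutes)
      define c where "c = (\<lambda>i. if i \<in> {1..n} then (the_inv_into D (\<lambda>x. x ! 0) i) ! k else i)"
      have into: "c ` {1..n} \<subseteq> {1..n}"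
        using pt[OF D] sub pos_nth k unfolding c_def by fastforce
      have inj: "inj_on c {1..n}"
      proof (rule inj_onI)
        fix i j assume i: "i \<in> {1..n}" and j: "j \<in> {1..n}" and e: "c i = c j"
        show "i = j"
        proof (rule ccontr)
          assume "i \<noteq> j"
          then have "the_inv_into D (\<lambda>x. x ! 0) i \<noteq> the_inv_into D (\<lambda>x. x ! 0) j"
            using pt[OF D i] pt[OF D j] by metis
          then show False using dif pt[OF D i] pt[OF D j] e i j k unfolding c_def by auto
        qed
      qed
      show "bij_betw c {1..n} {1..n}"
        using endo_inj_surj[OF finite_atLeastAtMost into inj] inj by (simp add: bij_betw_def)
    qed auto
    then show ?thesis unfolding enc_def P_def by auto
  qed
  have injE: "inj_on (enc d n) (diagonals d n)"
  proof (rule inj_onI)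
    have subs: "D \<subseteq> D'" if D: "D \<in> diagonals d n" and D': "D' \<in> diagonals d n"
      and e: "enc d n D = enc d n D'" for D D'
    proof
      fix x assume x: "x \<in> D"
      have xp: "x \<in> positions d n" using D x unfolding diagonals_def by auto
      define i where "i = x ! 0"
      have i: "i \<in> {1..n}" unfolding i_def using pos_nth[OF xp] d by simp
      define y where "y = the_inv_into D' (\<lambda>x. x ! 0) i"
      have y: "y \<in> D'" "y ! 0 = i" using pt[OF D' i] unfolding y_def by auto
      have yp: "y \<in> positions d n" using D' y unfolding diagonals_def by auto
      have "x ! k = y ! k" if k: "k < d" for k
      proof (cases "k = 0")
        case True then show ?thesis using y i_def by simp
      next
        case False
        then have k1: "k \<in> {1..<d}" using k by auto
        have "enc d n D k i = enc d n D' k i" using e by simp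
        then show ?thesis unfolding enc_def using k1 i ptx[OF D x] unfolding i_def[symmetric] y_def
          by simp
      qed
      moreover have "length x = d" "length y = d" using xp yp unfolding positions_def by auto
      ultimately have "x = y" by (intro nth_equalityI) auto
      then show "x \<in> D'" using y by simp
    qed
    fix D D' assume "D \<in> diagonals d n" "D' \<in> diagonals d n" "enc d n D = enc d n D'"
    then show "D = D'" using subs by (metis subset_antisym)
  qed
  have "card (diagonals d n) \<le> card P"
    using card_inj_on_le[OF injE _ finP] encP by auto
  then show ?thesis using cardP by simp
qed



lemma EE_supp:
  assumes "EE d xs \<noteq> 0" "k < d"
  shows "xs ! k \<in> {1, 2}"
proof -
  have "bb (xs ! k) \<noteq> 0" using assms unfolding EE_def by (auto simp: prod_zero_iff)
  then show ?thesis unfolding bb_def by (auto split: if_splits)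
qed

lemma EE_sq:
  assumes "\<And>k. k < d \<Longrightarrow> xs ! k \<in> {1, 2}"
  shows "EE d xs * EE d xs = 1"
proof -
  have "EE d xs * EE d xs = (\<Prod>k<d. bb (xs ! k) * bb (xs ! k))" unfolding EE_def by (simp add: prod.distrib)
  also have "\<dots> = (\<Prod>k<d. 1)" using assms by (intro prod.cong) (auto simp: bb_def)
  finally show ?thesis by simp
qed

lemma EE_comp:
  assumes "odd d" "\<And>k. k < d \<Longrightarrow> xs ! k \<in> {1, 2}" "\<And>k. k < d \<Longrightarrow> ys ! k \<in> {1, 2}"
    "\<And>k. k < d \<Longrightarrow> xs ! k \<noteq> ys ! k"
  shows "EE d ys = - EE d xs"
proof -
  have "EE d ys = (\<Prod>k<d. - bb (xs ! k))" unfolding EE_def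
  proof (intro prod.cong refl)
    fix k assume "k \<in> {..<d}"
    then have "xs ! k \<in> {1, 2}" "ys ! k \<in> {1, 2}" "xs ! k \<noteq> ys ! k" using assms by auto
    then show "bb (ys ! k) = - bb (xs ! k)" unfolding bb_def by auto
  qed
  also have "\<dots> = - EE d xs" unfolding EE_def prod_uminus using assms(1) by simp
  finally show ?thesis .
qed

lemma prod_diag:
  fixes u \<epsilon> :: real
  assumes D: "D \<in> diagonals d n" and d: "odd d" "d \<ge> 1" and n: "n \<ge> 2"
  shows "(\<Prod>x\<in>D. u + \<epsilon> * EE d x) = u ^ n + \<epsilon> * u ^ (n - 1) * (\<Sum>x\<in>D. EE d x)
           - (if card {x\<in>D. EE d x \<noteq> 0} = 2 then \<epsilon>\<^sup>2 * u ^ (n - 2) else 0)"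
proof -
  define K where "K = {x\<in>D. EE d x \<noteq> 0}"
  have sub: "D \<subseteq> positions d n" and cD: "card D = n"
    and dif: "\<And>x y k. x \<in> D \<Longrightarrow> y \<in> D \<Longrightarrow> x \<noteq> y \<Longrightarrow> k < d \<Longrightarrow> x ! k \<noteq> y ! k"
    using D unfolding diagonals_def by auto
  have finD: "finite D" using sub finite_positions finite_subset by blast
  have KD: "K \<subseteq> D" unfolding K_def by auto
  have finK: "finite K" using finD KD finite_subset by blast
  have Ksupp: "x ! k \<in> {1, 2}" if "x \<in> K" "k < d" for x k using that EE_supp unfolding K_def by auto
  have cK: "card K \<le> 2"
  proof -
    have inj: "inj_on (\<lambda>x. x ! 0) K" using dif d KD by (meson inj_onI subsetD zero_less_one less_le_trans)
    have "(\<lambda>x. x ! 0) ` K \<subseteq> {1, 2}" using Ksupp d by auto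
    then have "card ((\<lambda>x. x ! 0) ` K) \<le> card {1::nat, 2}" by (intro card_mono) auto
    then show ?thesis using card_image[OF inj] by simp
  qed
  have p1: "(\<Prod>x\<in>D. u + \<epsilon> * EE d x) = u ^ (n - card K) * (\<Prod>x\<in>K. u + \<epsilon> * EE d x)"
  proof -
    have "(\<Prod>x\<in>D. u + \<epsilon> * EE d x) = (\<Prod>x\<in>D - K. u + \<epsilon> * EE d x) * (\<Prod>x\<in>K. u + \<epsilon> * EE d x)"
      using prod.subset_diff[OF KD finD] by simp
    also have "(\<Prod>x\<in>D - K. u + \<epsilon> * EE d x) = (\<Prod>x\<in>D - K. u)"
      unfolding K_def by (intro prod.cong) auto
    also have "\<dots> = u ^ (n - card K)" using card_Diff_subset[OF finK KD] cD by simp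
    finally show ?thesis .
  qed
  have s1: "(\<Sum>x\<in>D. EE d x) = (\<Sum>x\<in>K. EE d x)"
    unfolding K_def using finD by (intro sum.mono_neutral_right) auto
  have "card K = 0 \<or> card K = 1 \<or> card K = 2" using cK by auto
  then show ?thesis
  proof (elim disjE)
    assume c0: "card K = 0"
    then have "K = {}" using finK by simp
    then show ?thesis using p1 s1 c0 unfolding K_def by simp
  next
    assume c1: "card K = 1"
    then obtain x where Kx: "K = {x}" using card_1_singletonE by blast
    have "u ^ (n - 1) * (u + \<epsilon> * EE d x) = u ^ n + \<epsilon> * u ^ (n - 1) * EE d x"
    proof -
      have "u ^ (n - 1) * u = u ^ n" using n by (metis One_nat_def Suc_le_D less_le_trans not_less_eq_eq numeral_2_eq_2 power_Suc2 diff_Suc_1 le_refl)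
      then show ?thesis by (simp add: algebra_simps)
    qed
    then show ?thesis using p1 s1 c1 Kx unfolding K_def[symmetric] by simp
  next
    assume c2: "card K = 2"
    then obtain x y where Kxy: "K = {x, y}" "x \<noteq> y" by (meson card_2_iff)
    have xy: "x \<in> D" "y \<in> D" using Kxy KD by auto
    have ey: "EE d y = - EE d x"
      by (rule EE_comp) (use d Ksupp Kxy dif xy in auto)
    have ex: "EE d x * EE d x = 1" by (rule EE_sq) (use Ksupp Kxy in auto)
    have un: "u ^ (n - 2) * u * u = u ^ n"
    proof -
      have "n = Suc (Suc (n - 2))" using n by simp
      then show ?thesis by (metis power_Suc2)
    qed
    have "(\<Prod>x\<in>K. u + \<epsilon> * EE d x) = (u + \<epsilon> * EE d x) * (u + \<epsilon> * EE d y)"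
      using Kxy by simp
    also have "\<dots> = u * u - \<epsilon>\<^sup>2" using ey ex by (simp add: algebra_simps power2_eq_square)
    finally have pk: "(\<Prod>x\<in>K. u + \<epsilon> * EE d x) = u * u - \<epsilon>\<^sup>2" .
    have sk: "(\<Sum>x\<in>K. EE d x) = 0" using Kxy ey by simp
    show ?thesis using p1 s1 c2 pk sk un unfolding K_def[symmetric]
      by (simp add: algebra_simps)
  qed
qed

lemma D0_diag:
  assumes d: "d \<ge> 1"
  shows "(\<lambda>i. replicate d i) ` {1..n} \<in> diagonals d n"
proof -
  have inj: "inj_on (\<lambda>i. replicate d i) {1..n}"
  proof (rule inj_onI)
    fix i j assume "replicate d i = replicate d (j::nat)"
    then show "i = j" using d by simp
  qed
  show ?thesis unfolding diagonals_def positions_def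
    using card_image[OF inj] by auto
qed

lemma D0_K:
  assumes d: "d \<ge> 1" and n: "n \<ge> 2"
  shows "card {x \<in> (\<lambda>i. replicate d i) ` {1..n}. EE d x \<noteq> 0} = 2"
proof -
  have E: "EE d (replicate d i) = bb i ^ d" for i unfolding EE_def by simp
  have "{x \<in> (\<lambda>i. replicate d i) ` {1..n}. EE d x \<noteq> 0} = {replicate d 1, replicate d 2}"
    using n d by (auto simp: E bb_def split: if_splits)
  moreover have "replicate d (1::nat) \<noteq> replicate d 2"
  proof
    assume "replicate d (1::nat) = replicate d 2"
    then show False using d by simp
  qed
  ultimately show ?thesis by simp
qed


theorem theorem3p8:
  fixes d n :: nat
  assumes "d \<ge> 3" and "odd d" and "n > 2"
  shows "\<exists>A\<in>Hull (Lambda d n).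
           Per d n A < (fact n / real n ^ n) ^ (d - 1) \<or>
           (Per d n A = (fact n / real n ^ n) ^ (d - 1) \<and>
            A \<noteq> (\<lambda>xs. (1 / real n ^ (d - 1)) * J d n xs))"
proof -
  have d1: "d \<ge> 1" "d \<ge> 2" using assms by auto
  have n: "n \<ge> 3" "n \<ge> 2" using assms by auto
  define u :: real where "u = 1 / real n ^ (d - 1)"
  have upos: "u > 0" unfolding u_def using n by simp
  define e0 :: real where "e0 = u / 8 ^ (d - 1)"
  have e0pos: "e0 > 0" unfolding e0_def using upos by simp
  define S where "S = (\<Sum>D\<in>diagonals d n. \<Sum>x\<in>D. EE d x)"
  define \<epsilon> where "\<epsilon> = (if S \<le> 0 then e0 else - e0)"
  have epsS: "\<epsilon> * S \<le> 0"
  proof (cases "S \<le> 0")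
    case True then show ?thesis unfolding \<epsilon>_def using e0pos by (simp add: mult_nonneg_nonpos)
  next
    case False then show ?thesis unfolding \<epsilon>_def using e0pos by (simp add: mult_nonneg_nonneg)
  qed
  have epsabs: "\<bar>\<epsilon>\<bar> \<le> u / 8 ^ (d - 1)" unfolding \<epsilon>_def e0_def using upos by auto
  have epsnz: "\<epsilon> \<noteq> 0" unfolding \<epsilon>_def using e0pos by auto
  define A where "A = (\<lambda>xs. if xs \<in> positions d n then u + \<epsilon> * EE d xs else 0)"
  have AH: "A \<in> Hull (Lambda d n)" unfolding A_def by (rule A_hull[OF d1(2) n(1) u_def epsabs])
  define C where "C D = (if card {x\<in>D. EE d x \<noteq> 0} = 2 then \<epsilon>\<^sup>2 * u ^ (n - 2) else 0)" for D :: "nat list set"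
  have "Per d n A = (\<Sum>D\<in>diagonals d n. \<Prod>x\<in>D. u + \<epsilon> * EE d x)"
    unfolding Per_def
  proof (intro sum.cong refl prod.cong)
    fix D x assume "D \<in> diagonals d n" "x \<in> D"
    then have "x \<in> positions d n" unfolding diagonals_def by auto
    then show "A x = u + \<epsilon> * EE d x" unfolding A_def by simp
  qed
  also have "\<dots> = (\<Sum>D\<in>diagonals d n. u ^ n + \<epsilon> * u ^ (n - 1) * (\<Sum>x\<in>D. EE d x) - C D)"
    unfolding C_def using prod_diag[OF _ assms(2) d1(1) n(2)] by (intro sum.cong) auto
  also have "\<dots> = card (diagonals d n) * u ^ n + \<epsilon> * u ^ (n - 1) * S - (\<Sum>D\<in>diagonals d n. C D)"
    unfolding S_def by (simp add: sum.distrib sum_subtractf sum_distrib_left)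
  finally have Peq: "Per d n A = card (diagonals d n) * u ^ n + \<epsilon> * u ^ (n - 1) * S - (\<Sum>D\<in>diagonals d n. C D)" .
  define D0 where "D0 = (\<lambda>i. replicate d i) ` {1..n}"
  have D0: "D0 \<in> diagonals d n" unfolding D0_def by (rule D0_diag[OF d1(1)])
  have CD0: "C D0 = \<epsilon>\<^sup>2 * u ^ (n - 2)" unfolding C_def D0_def using D0_K[OF d1(1) n(2)] by simp
  have Cpos: "\<epsilon>\<^sup>2 * u ^ (n - 2) > 0" using epsnz upos by simp
  have "C D0 \<le> (\<Sum>D\<in>diagonals d n. C D)"
    by (rule member_le_sum[OF D0 _ finite_diagonals]) (use upos in \<open>auto simp: C_def\<close>)
  moreover have "\<epsilon> * u ^ (n - 1) * S \<le> 0"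
  proof -
    have "\<epsilon> * u ^ (n - 1) * S = u ^ (n - 1) * (\<epsilon> * S)" by simp
    also have "\<dots> \<le> 0" using upos epsS by (simp add: mult_nonneg_nonpos)
    finally show ?thesis .
  qed
  ultimately have "Per d n A < card (diagonals d n) * u ^ n" using Peq CD0 Cpos by linarith
  also have "\<dots> \<le> fact n ^ (d - 1) * u ^ n"
  proof -
    have "real (card (diagonals d n)) \<le> real (fact n ^ (d - 1))"
      using card_diagonals[OF d1(1), of n] by (simp only: of_nat_le_iff)
    then have "real (card (diagonals d n)) \<le> fact n ^ (d - 1)" by (simp add: of_nat_power)
    then show ?thesis using upos by (intro mult_right_mono) auto
  qed
  also have "fact n ^ (d - 1) * u ^ n = (fact n / real n ^ n) ^ (d - 1)"
    unfolding u_def by (simp add: power_divide power_mult[symmetric] mult.commute)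
  finally show ?thesis using AH by blast
qed

end
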